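(* Let $\kappa$ be an uncountable regular cardinal, let $\mathcal{I}$ be a $\kappa$-complete proper ideal on $\kappa$ containing every bounded subset of $\kappa$, and let $\nu\in\{2,\kappa\}$. For every function $\Phi\colon{}^{\kappa}\nu\to{}^{\kappa}\nu$ that is continuous with respect to $\tau_{\mathcal{I}}$ on both sides, there is a continuous $\varphi\colon\mathrm{Fn}_{\mathcal{I}}({}^{\kappa}\nu)\to\mathrm{Fn}_{\mathcal{I}}({}^{\kappa}\nu)$ with $\varphi^*=\Phi$.
   Context: ${}^{\kappa}\nu$ is the set of functions $\kappa\to\nu$, $\mathrm{Fn}_{\mathcal{I}}({}^{\kappa}\nu)$ the set of functions $f\colon D\to\nu$ with $D\in\mathcal{I}$, $\mathbf{N}_f=\{x:f\subseteq x\}$, and $\tau_{\mathcal{I}}$ the topology on ${}^{\kappa}\nu$ generated by the sets $\mathbf{N}_f$. A map $\varphi\colon\mathrm{Fn}_{\mathcal{I}}\to\mathrm{Fn}_{\mathcal{I}}$ is monotone if $f\subseteq g$ implies $\varphi(f)\subseteq\varphi(g)$; it is continuous if it is monotone and for all $x\in{}^{\kappa}\nu$ and $D\in\mathcal{I}$ there is $E\in\mathcal{I}$ with $D\subseteq\mathrm{dom}(\varphi(x\restriction E))$. For continuous $\varphi$, $\varphi^*(x)$ is the limit $\lim_{D\in\mathcal{I}}\varphi(x\restriction D)$ over the directed set $(\mathcal{I},\subseteq)$, i.e. the unique $z\in{}^{\kappa}\nu$ such that for every $D\in\mathcal{I}$ there is $E\in\mathcal{I}$ with $z\restriction D=\varphi(x\restriction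 E')\restriction D$ for all $E'\in\mathcal{I}$ with $E\subseteq E'$. *)

theory Defs
  imports "HOL-Analysis.Analysis"
begin

unbundle cardinal_syntax

text \<open>kappa is represented by a type 'k carrying a cardinal well-order r on UNIV.
  Total functions kappa -> nu are functions 'k \<Rightarrow> 'v; partial functions are maps 'k \<rightharpoonup> 'v.\<close>

definition kappa_complete_ideal :: "('k \<times> 'k) set \<Rightarrow> 'k set set \<Rightarrow> bool" where
  "kappa_complete_ideal r I \<longleftrightarrow>
     {} \<in> I \<and>
     (\<forall>A B. A \<in> I \<and> B \<subseteq> A \<longrightarrow> B \<in> I) \<and>
     (\<forall>\<A>. \<A> \<subseteq> I \<and> |\<A>| <o r \<longrightarrow> \<Union>\<A> \<in> I)"

definition proper_ideal :: "'k set set \<Rightarrow> bool" where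
  "proper_ideal I \<longleftrightarrow> UNIV \<notin> I"

definition bounded_in :: "('k \<times> 'k) set \<Rightarrow> 'k set \<Rightarrow> bool" where
  "bounded_in r A \<longleftrightarrow> (\<exists>b. \<forall>a\<in>A. (a, b) \<in> r)"

definition Fn :: "'k set set \<Rightarrow> ('k \<rightharpoonup> 'v) set" where
  "Fn I = {f. dom f \<in> I}"

definition Nbhd :: "('k \<rightharpoonup> 'v) \<Rightarrow> ('k \<Rightarrow> 'v) set" where
  "Nbhd f = {x. \<forall>d\<in>dom f. f d = Some (x d)}"

definition tau :: "'k set set \<Rightarrow> ('k \<Rightarrow> 'v) topology" where
  "tau I = topology_generated_by (Nbhd ` Fn I)"

definition restr :: "('k \<Rightarrow> 'v) \<Rightarrow> 'k set \<Rightarrow> ('k \<rightharpoonup> 'v)" where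
  "restr x E = (Some \<circ> x) |` E"

definition monotone_Fn :: "'k set set \<Rightarrow> (('k \<rightharpoonup> 'v) \<Rightarrow> ('k \<rightharpoonup> 'v)) \<Rightarrow> bool" where
  "monotone_Fn I \<phi> \<longleftrightarrow> (\<forall>f\<in>Fn I. \<forall>g\<in>Fn I. f \<subseteq>\<^sub>m g \<longrightarrow> \<phi> f \<subseteq>\<^sub>m \<phi> g)"

definition continuous_Fn :: "'k set set \<Rightarrow> (('k \<rightharpoonup> 'v) \<Rightarrow> ('k \<rightharpoonup> 'v)) \<Rightarrow> bool" where
  "continuous_Fn I \<phi> \<longleftrightarrow>
     (\<forall>f\<in>Fn I. \<phi> f \<in> Fn I) \<and> monotone_Fn I \<phi> \<and>
     (\<forall>x. \<forall>D\<in>I. \<exists>E\<in>I. D \<subseteq> dom (\<phi> (restr x E)))"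

text \<open>z is the limit of phi(x|D) over the directed set (I, subseteq).\<close>
definition is_lim :: "'k set set \<Rightarrow> (('k \<rightharpoonup> 'v) \<Rightarrow> ('k \<rightharpoonup> 'v)) \<Rightarrow> ('k \<Rightarrow> 'v) \<Rightarrow> ('k \<Rightarrow> 'v) \<Rightarrow> bool" where
  "is_lim I \<phi> x z \<longleftrightarrow>
     (\<forall>D\<in>I. \<exists>E\<in>I. \<forall>E'\<in>I. E \<subseteq> E' \<longrightarrow> restr z D = \<phi> (restr x E') |` D)"

definition star :: "'k set set \<Rightarrow> (('k \<rightharpoonup> 'v) \<Rightarrow> ('k \<rightharpoonup> 'v)) \<Rightarrow> ('k \<Rightarrow> 'v) \<Rightarrow> ('k \<Rightarrow> 'v)" where
  "star I \<phi> x = (THE z. is_lim I \<phi> x z)"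

end

theory Submission
  imports Defs
begin

unbundle cardinal_syntax

lemma fin_union_I:
  assumes co: "card_order r" and unc: "\<not> countable (UNIV :: 'k set)"
    and ki: "kappa_complete_ideal r (I :: 'k set set)" and A: "A \<in> I" and B: "B \<in> I"
  shows "A \<union> B \<in> I"
proof -
  have fr: "Field r = UNIV" using card_order_on_Card_order[OF co] by simp
  have Co: "Card_order r" using co by (simp add: fr)
  have wo: "Well_order r" using card_order_on_well_order_on[OF Co] .
  have "\<not> finite (UNIV :: 'k set)" using unc countable_finite by blast
  hence inf: "\<not> finite (Field r)" by (simp add: fr)
  have "|{A,B}| <o r"
    by (rule finite_ordLess_infinite[OF card_of_Well_order wo]) (simp add: Field_card_of, rule inf)
  moreover have "{A,B} \<subseteq> I" using A B by simp
  moreover have "\<forall>\<A>. \<A> \<subseteq> I \<and> |\<A>| <o r \<longrightarrow> \<Union>\<A> \<in> I"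
    using ki unfolding kappa_complete_ideal_def by (elim conjE)
  ultimately have "\<Union>{A,B} \<in> I" by (meson)
  thus ?thesis by simp
qed

definition ext :: "('k \<rightharpoonup> 'v) \<Rightarrow> 'k \<Rightarrow> 'v" where
  "ext f = (\<lambda>d. case f d of Some v \<Rightarrow> v | None \<Rightarrow> undefined)"

lemma ext_Nbhd: "ext f \<in> Nbhd f"
  unfolding ext_def Nbhd_def by auto

lemma Nbhd_mono: assumes fg: "f \<subseteq>\<^sub>m g" shows "Nbhd g \<subseteq> Nbhd f"
proof
  fix x assume x: "x \<in> Nbhd g"
  show "x \<in> Nbhd f" unfolding Nbhd_def
  proof (rule CollectI, rule ballI)
    fix d assume d: "d \<in> dom f"
    hence "f d = g d" using fg unfolding map_le_def by blast
    moreover have "d \<in> dom g" using d calculation by (simp add: domIff)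
    ultimately show "f d = Some (x d)" using x unfolding Nbhd_def by simp
  qed
qed

lemma dom_restr[simp]: "dom (restr x E) = E"
  unfolding restr_def by auto

lemma Nbhd_restr: "y \<in> Nbhd (restr x E) \<longleftrightarrow> (\<forall>d\<in>E. y d = x d)"
  unfolding Nbhd_def dom_restr by (auto simp: restr_def)

lemma open_basic:
  assumes co: "card_order r" and unc: "\<not> countable (UNIV :: 'k set)"
    and ki: "kappa_complete_ideal r (I :: 'k set set)"
    and g: "generate_topology_on (Nbhd ` Fn I) (U :: ('k \<Rightarrow> 'v) set)"
  shows "\<forall>x\<in>U. \<exists>E\<in>I. Nbhd (restr x E) \<subseteq> U"
  using g
proof induction
  case Empty
  then show ?case by simp
next
  case (Int a b)
  show ?case
  proof
    fix x assume "x \<in> a \<inter> b"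
    then obtain E1 E2 where "E1 \<in> I" "Nbhd (restr x E1) \<subseteq> a" "E2 \<in> I" "Nbhd (restr x E2) \<subseteq> b"
      using Int by blast
    moreover have "E1 \<union> E2 \<in> I" using fin_union_I[OF co unc ki] calculation by blast
    moreover have "Nbhd (restr x (E1 \<union> E2)) \<subseteq> Nbhd (restr x E1) \<inter> Nbhd (restr x E2)"
      by (auto simp: Nbhd_restr)
    ultimately show "\<exists>E\<in>I. Nbhd (restr x E) \<subseteq> a \<inter> b" by blast
  qed
next
  case (UN K)
  then show ?case by blast
next
  case (Basis s)
  then obtain f where f: "f \<in> Fn I" "s = Nbhd f" by blast
  show ?case
  proof
    fix x assume "x \<in> s"
    hence "Nbhd (restr x (dom f)) \<subseteq> s" using f unfolding Nbhd_def restr_def by auto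
    thus "\<exists>E\<in>I. Nbhd (restr x E) \<subseteq> s" using f(1) unfolding Fn_def by blast
  qed
qed

theorem proposition3p3:
  fixes r :: "('k \<times> 'k) set" and I :: "'k set set"
    and \<Phi> :: "('k \<Rightarrow> 'v) \<Rightarrow> ('k \<Rightarrow> 'v)"
  assumes "card_order r"
    and "regularCard r"
    and "\<not> countable (UNIV :: 'k set)"
    and "kappa_complete_ideal r I"
    and "proper_ideal I"
    and "\<forall>A. bounded_in r A \<longrightarrow> A \<in> I"
    and "card (UNIV :: 'v set) = 2 \<or> |UNIV :: 'v set| =o r"
    and "continuous_map (tau I) (tau I) \<Phi>"
  shows "\<exists>\<phi>. continuous_Fn I \<phi> \<and> star I \<phi> = \<Phi>"
proof -
  note co = assms(1) and unc = assms(3) and ki = assms(4) and cm = assms(8)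
  have empI: "{} \<in> I" using ki unfolding kappa_complete_ideal_def by (elim conjE)
  have subI': "\<forall>A B. A \<in> I \<and> B \<subseteq> A \<longrightarrow> B \<in> I"
    using ki unfolding kappa_complete_ideal_def by (elim conjE)
  have subI: "\<And>A B. A \<in> I \<Longrightarrow> B \<subseteq> A \<Longrightarrow> B \<in> I"
    using subI' by meson
  have singI: "\<And>d. {d} \<in> I"
  proof -
    fix d
    have "Field r = UNIV" using co card_order_on_Card_order by blast
    moreover have "Card_order r" using co card_order_on_Card_order by blast
    ultimately have "(d,d) \<in> r"
      by (simp add: card_order_on_def well_order_on_def linear_order_on_def partial_order_on_def
          preorder_on_def refl_on_def)
    hence "bounded_in r {d}" unfolding bounded_in_def by blast
    thus "{d} \<in> I" using assms(6) by blast
  qed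
  have top: "topspace (tau I) = (UNIV :: ('k \<Rightarrow> 'v) set)"
  proof -
    have "Nbhd Map.empty \<in> Nbhd ` Fn I" using empI unfolding Fn_def by auto
    moreover have "Nbhd (Map.empty :: 'k \<rightharpoonup> 'v) = UNIV" unfolding Nbhd_def by auto
    moreover have "topspace (tau I) = \<Union>(Nbhd ` Fn I)"
      unfolding tau_def by (rule topology_generated_by_topspace)
    ultimately show ?thesis by blast
  qed
  have key: "\<exists>E\<in>I. D \<subseteq> E \<and> (\<forall>y. (\<forall>d\<in>E. y d = x d) \<longrightarrow> (\<forall>d\<in>D. \<Phi> y d = \<Phi> x d))"
    if D: "D \<in> I" for D x
  proof -
    have "openin (tau I) (Nbhd (restr (\<Phi> x) D))"
      unfolding tau_def openin_topology_generated_by_iff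
      by (rule generate_topology_on.Basis, rule imageI) (simp add: Fn_def D)
    hence "openin (tau I) {y \<in> topspace (tau I). \<Phi> y \<in> Nbhd (restr (\<Phi> x) D)}"
      by (rule openin_continuous_map_preimage[OF cm])
    hence "openin (tau I) {y. \<Phi> y \<in> Nbhd (restr (\<Phi> x) D)}"
      by (simp add: top)
    hence gen: "generate_topology_on (Nbhd ` Fn I) {y. \<Phi> y \<in> Nbhd (restr (\<Phi> x) D)}"
      unfolding tau_def openin_topology_generated_by_iff .
    have xin: "x \<in> {y. \<Phi> y \<in> Nbhd (restr (\<Phi> x) D)}" by (simp add: Nbhd_restr)
    from bspec[OF open_basic[OF co unc ki gen] xin] obtain E0 where E0: "E0 \<in> I"
      "Nbhd (restr x E0) \<subseteq> {y. \<Phi> y \<in> Nbhd (restr (\<Phi> x) D)}"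
      by (elim bexE)
    have "D \<union> E0 \<in> I" using fin_union_I[OF co unc ki D E0(1)] .
    moreover have "\<forall>y. (\<forall>d\<in>D \<union> E0. y d = x d) \<longrightarrow> (\<forall>d\<in>D. \<Phi> y d = \<Phi> x d)"
    proof (intro allI impI)
      fix y assume "\<forall>d\<in>D \<union> E0. y d = x d"
      hence "y \<in> Nbhd (restr x E0)" by (simp add: Nbhd_restr)
      hence "\<Phi> y \<in> Nbhd (restr (\<Phi> x) D)" using E0(2) by blast
      thus "\<forall>d\<in>D. \<Phi> y d = \<Phi> x d" by (simp add: Nbhd_restr)
    qed
    ultimately show ?thesis by blast
  qed
  define \<phi> :: "('k \<rightharpoonup> 'v) \<Rightarrow> ('k \<rightharpoonup> 'v)" where
    "\<phi> f = (\<lambda>d. if d \<in> dom f \<and> (\<exists>v. \<forall>y\<in>Nbhd f. \<Phi> y d = v) then Some (\<Phi> (ext f) d) else None)"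
    for f
  have phiS: "\<phi> f d = Some (\<Phi> (ext f) d)"
    if "d \<in> dom f" "\<forall>y\<in>Nbhd f. \<Phi> y d = v" for f :: "'k \<rightharpoonup> 'v" and d v
  proof -
    have "d \<in> dom f \<and> (\<exists>v. \<forall>y\<in>Nbhd f. \<Phi> y d = v)" using that by blast
    thus ?thesis unfolding \<phi>_def by (rule if_P)
  qed
  have phiD: "d \<in> dom f \<and> (\<exists>v. \<forall>y\<in>Nbhd f. \<Phi> y d = v)"
    if "d \<in> dom (\<phi> f)" for f :: "'k \<rightharpoonup> 'v" and d
  proof (rule ccontr)
    assume "\<not> (d \<in> dom f \<and> (\<exists>v. \<forall>y\<in>Nbhd f. \<Phi> y d = v))"
    hence "\<phi> f d = None" unfolding \<phi>_def by (rule if_not_P)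
    with that show False by (simp add: domIff)
  qed
  have \<phi>None: "\<phi> f d = None" if "d \<notin> dom f" for f :: "'k \<rightharpoonup> 'v" and d
    using that unfolding \<phi>_def by simp
  have dom\<phi>: "dom (\<phi> f) \<subseteq> dom f" for f :: "'k \<rightharpoonup> 'v"
  proof
    fix d assume a: "d \<in> dom (\<phi> f)"
    show "d \<in> dom f"
    proof (rule ccontr)
      assume "d \<notin> dom f"
      hence "\<phi> f d = None" by (rule \<phi>None)
      with a show False by (simp add: domIff)
    qed
  qed
  have cont: "continuous_Fn I \<phi>"
    unfolding continuous_Fn_def
  proof (intro conjI ballI allI)
    fix f :: "'k \<rightharpoonup> 'v" assume "f \<in> Fn I"
    hence "dom f \<in> I" unfolding Fn_def by simp
    thus "\<phi> f \<in> Fn I" unfolding Fn_def mem_Collect_eq by (rule subI[OF _ dom\<phi>])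
  next
    show "monotone_Fn I \<phi>" unfolding monotone_Fn_def
    proof (intro ballI impI)
      fix f g :: "'k \<rightharpoonup> 'v" assume fg: "f \<subseteq>\<^sub>m g"
      show "\<phi> f \<subseteq>\<^sub>m \<phi> g" unfolding map_le_def
      proof (intro ballI)
        fix d assume "d \<in> dom (\<phi> f)"
        then obtain v where d: "d \<in> dom f" "\<forall>y\<in>Nbhd f. \<Phi> y d = v"
          using phiD[OF \<open>d \<in> dom (\<phi> f)\<close>] by blast
        have "f d = g d" using fg d(1) unfolding map_le_def by blast
        hence "d \<in> dom g" using d(1) by (simp add: domIff)
        moreover have "\<forall>y\<in>Nbhd g. \<Phi> y d = v" using d(2) Nbhd_mono[OF fg] by blast
        moreover have "\<Phi> (ext f) d = v" by (rule bspec[OF d(2) ext_Nbhd])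
        moreover have "\<Phi> (ext g) d = v" by (rule bspec[OF calculation(2) ext_Nbhd])
        moreover have "\<phi> f d = Some (\<Phi> (ext f) d)" by (rule phiS[OF d])
        moreover have "\<phi> g d = Some (\<Phi> (ext g) d)" by (rule phiS[OF calculation(1,2)])
        ultimately show "\<phi> f d = \<phi> g d" by simp
      qed
    qed
  next
    fix x D assume D: "D \<in> I"
    from key[OF D, of x] obtain E where E0: "E \<in> I" and E1: "D \<subseteq> E \<and>
      (\<forall>y. (\<forall>d\<in>E. y d = x d) \<longrightarrow> (\<forall>d\<in>D. \<Phi> y d = \<Phi> x d))" by (rule bexE)
    note E = E0 conjunct1[OF E1] conjunct2[OF E1]
    have "D \<subseteq> dom (\<phi> (restr x E))"
    proof
      fix d assume "d \<in> D"
      have "\<forall>y\<in>Nbhd (restr x E). \<Phi> y d = \<Phi> x d"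
      proof
        fix y assume "y \<in> Nbhd (restr x E)"
        hence "\<forall>d\<in>E. y d = x d" by (simp add: Nbhd_restr)
        with E(3) \<open>d \<in> D\<close> show "\<Phi> y d = \<Phi> x d" by blast
      qed
      moreover have "d \<in> dom (restr x E)" using E(2) \<open>d \<in> D\<close> by auto
      ultimately have "\<phi> (restr x E) d = Some (\<Phi> (ext (restr x E)) d)" by (rule phiS[rotated])
      thus "d \<in> dom (\<phi> (restr x E))" by (rule domI)
    qed
    thus "\<exists>E\<in>I. D \<subseteq> dom (\<phi> (restr x E))" using E(1) by blast
  qed
  have lim: "is_lim I \<phi> x (\<Phi> x)" for x
    unfolding is_lim_def
  proof (intro ballI)
    fix D assume D: "D \<in> I"
    from key[OF D, of x] obtain E where E0: "E \<in> I" and E1: "D \<subseteq> E \<and>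
      (\<forall>y. (\<forall>d\<in>E. y d = x d) \<longrightarrow> (\<forall>d\<in>D. \<Phi> y d = \<Phi> x d))" by (rule bexE)
    note E = E0 conjunct1[OF E1] conjunct2[OF E1]
    have "restr (\<Phi> x) D = \<phi> (restr x E') |` D" if "E' \<in> I" "E \<subseteq> E'" for E'
    proof
      fix d show "restr (\<Phi> x) D d = (\<phi> (restr x E') |` D) d"
      proof (cases "d \<in> D")
        case True
        have all: "\<forall>y\<in>Nbhd (restr x E'). \<Phi> y d = \<Phi> x d"
        proof
          fix y assume "y \<in> Nbhd (restr x E')"
          hence "\<forall>d\<in>E'. y d = x d" by (simp add: Nbhd_restr)
          hence "\<forall>d\<in>E. y d = x d" using that(2) by blast
          with E(3) True show "\<Phi> y d = \<Phi> x d" by blast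
        qed
        have e: "\<Phi> (ext (restr x E')) d = \<Phi> x d" by (rule bspec[OF all ext_Nbhd])
        have "d \<in> dom (restr x E')" using E(2) that(2) True by auto
        hence "\<phi> (restr x E') d = Some (\<Phi> (ext (restr x E')) d)" by (rule phiS[OF _ all])
        hence "\<phi> (restr x E') d = Some (\<Phi> x d)" by (simp only: e)
        then show ?thesis using True unfolding restr_def by simp
      next
        case False
        then show ?thesis unfolding restr_def by simp
      qed
    qed
    thus "\<exists>E\<in>I. \<forall>E'\<in>I. E \<subseteq> E' \<longrightarrow> restr (\<Phi> x) D = \<phi> (restr x E') |` D"
      using E(1) by blast
  qed
  have uniq: "z = \<Phi> x" if z: "is_lim I \<phi> x z" for x z
  proof
    fix d
    obtain E1 where E1: "E1 \<in> I" "\<forall>E'\<in>I. E1 \<subseteq> E' \<longrightarrow> restr z {d} = \<phi> (restr x E') |` {d}"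
      using bspec[OF z[unfolded is_lim_def] singI] by (rule bexE)
    obtain E2 where E2: "E2 \<in> I" "\<forall>E'\<in>I. E2 \<subseteq> E' \<longrightarrow> restr (\<Phi> x) {d} = \<phi> (restr x E') |` {d}"
      using bspec[OF lim[of x, unfolded is_lim_def] singI] by (rule bexE)
    have U: "E1 \<union> E2 \<in> I" using fin_union_I[OF co unc ki E1(1) E2(1)] .
    have "restr z {d} = \<phi> (restr x (E1 \<union> E2)) |` {d}" using E1(2) U by simp
    moreover have "restr (\<Phi> x) {d} = \<phi> (restr x (E1 \<union> E2)) |` {d}" using E2(2) U by simp
    ultimately have "restr z {d} = restr (\<Phi> x) {d}" by simp
    hence "restr z {d} d = restr (\<Phi> x) {d} d" by simp
    thus "z d = \<Phi> x d" unfolding restr_def by simp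
  qed
  have "star I \<phi> = \<Phi>"
  proof
    fix x show "star I \<phi> x = \<Phi> x"
      unfolding star_def by (rule the_equality[where P="is_lim I \<phi> x", OF lim[of x] uniq])
  qed
  with cont show ?thesis by blast
qed

end
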